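(* In the cone setting of the context, for each $\ell\in\mathcal C'_{\mathbb C}$ we have $\|\ell\|'\le\sqrt2\,|\ell(e)|$, where $\|\ell\|'=\sup_{\|h\|\le1}|\ell(h)|$ is the dual norm on $\mathcal B'_{\mathbb C}$.
   Context: Cone setting. $V$ is a real topological vector space, $\mathcal S\subset V'$ a set of linear functionals such that $\ell(x)=0$ for all $\ell\in\mathcal S$ implies $x=0$, $C_{\mathbb R}=\{h\in V\setminus\{0\}:\ell(h)\ge0\ \forall\ell\in\mathcal S\}$, and $e\in C_{\mathbb R}$ is such that for every $h\in V$ some $\lambda\ge0$ has $\lambda e-h\in C_{\mathbb R}$. Norm $\|h\|=\inf\{\lambda\ge0:\ell(\lambda e\pm h)\ge0\ \forall\ell\in\mathcal S\}$; $\mathcal B_{\mathbb R}$ the completion of $V$; $\mathcal C_{\mathbb R}=\{h\in\mathcal B_{\mathbb R}\setminus\{0\}:\ell(h)\ge0\ \forall\ell\in\mathcal S\}$. $\mathcal S_*$ is the weak-$*$ closure of the convex hull of $\{\lambda\ell:\lambda>0,\ell\in\mathcal S\}$, and there exist $m\in\mathcal S_*$, $\kappa\in(0,1)$ with $m(e)=1$ and $m(h)\ge\kappa\|h\|$ on $\mathcal C_{\mathbb R}$. $\mathcal B_{\mathbb C}$ is the complexification of $\mathcal B_{\mathbb R}$ (elements $x+iy$, norm $\sup_\theta(\|\Re(e^{i\theta}(x+iy))\|^2+\|\Im(e^{i\theta}(x+iy))\|^2)^{1/2}$), real functionals extended complex-linearly. $\mathcal C_{\mathbb C}=\{z(x+iy):z\in\mathbb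 C\setminus\{0\},x,y\in\mathcal C_{\mathbb R}\}$ and $\mathcal C'_{\mathbb C}=\{\ell\in\mathcal B'_{\mathbb C}:\ell(h)\ne0\ \forall h\in\mathcal C_{\mathbb C}\}$. *)

theory Defs
  imports "HOL-Analysis.Analysis"
begin

definition tvs :: "'v::{real_vector,topological_space} itself \<Rightarrow> bool" where
  "tvs _ \<longleftrightarrow> continuous_on UNIV (\<lambda>(x::'v, y::'v). x + y) \<and>
              continuous_on UNIV (\<lambda>(c::real, x::'v). c *\<^sub>R x)"

definition top_dual :: "('v::{real_vector,topological_space} \<Rightarrow> real) set" where
  "top_dual = {l. linear l \<and> continuous_on UNIV l}"

definition pos_cone :: "('a \<Rightarrow> real) set \<Rightarrow> 'a::zero set" where
  "pos_cone L = {h. h \<noteq> 0 \<and> (\<forall>l\<in>L. l h \<ge> 0)}"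

definition cone_norm :: "('v::real_vector \<Rightarrow> real) set \<Rightarrow> 'v \<Rightarrow> 'v \<Rightarrow> real" where
  "cone_norm S e h = Inf {t. t \<ge> 0 \<and>
      (\<forall>l\<in>S. l (t *\<^sub>R e + h) \<ge> 0 \<and> l (t *\<^sub>R e - h) \<ge> 0)}"

definition conv_fun :: "('v \<Rightarrow> real) set \<Rightarrow> ('v \<Rightarrow> real) set" where
  "conv_fun P = {g. \<exists>(n::nat) c f. n > 0 \<and> (\<forall>i<n. c i \<ge> (0::real) \<and> f i \<in> P) \<and>
      (\<Sum>i<n. c i) = 1 \<and> g = (\<lambda>x. \<Sum>i<n. c i * f i x)}"

definition weak_star_closure ::
    "('v::{real_vector,topological_space} \<Rightarrow> real) set \<Rightarrow> ('v \<Rightarrow> real) set" where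
  "weak_star_closure A = {m. m \<in> top_dual \<and>
      (\<forall>F \<epsilon>. finite F \<and> \<epsilon> > 0 \<longrightarrow> (\<exists>g\<in>A. \<forall>x\<in>F. \<bar>m x - g x\<bar> < \<epsilon>))}"

definition S_star :: "('v::{real_vector,topological_space} \<Rightarrow> real) set \<Rightarrow> ('v \<Rightarrow> real) set" where
  "S_star S = weak_star_closure (conv_fun {(\<lambda>x. t * l x) | t l. t > 0 \<and> l \<in> S})"

text \<open>Complexification B_C of B_R, realised as pairs (x,y) standing for x + iy.\<close>
definition cmul :: "complex \<Rightarrow> 'b::real_vector \<times> 'b \<Rightarrow> 'b \<times> 'b" where
  "cmul z h = (Re z *\<^sub>R fst h - Im z *\<^sub>R snd h, Re z *\<^sub>R snd h + Im z *\<^sub>R fst h)"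

definition cnorm :: "'b::real_normed_vector \<times> 'b \<Rightarrow> real" where
  "cnorm h = (SUP \<theta>\<in>(UNIV::real set).
      sqrt ((norm (cos \<theta> *\<^sub>R fst h - sin \<theta> *\<^sub>R snd h))\<^sup>2 +
            (norm (sin \<theta> *\<^sub>R fst h + cos \<theta> *\<^sub>R snd h))\<^sup>2))"

definition cdual :: "('b::real_normed_vector \<times> 'b \<Rightarrow> complex) set" where
  "cdual = {l. (\<forall>h k. l (h + k) = l h + l k) \<and> (\<forall>z h. l (cmul z h) = z * l h) \<and>
              (\<exists>K. \<forall>h. cmod (l h) \<le> K * cnorm h)}"

definition dual_norm :: "('b::real_normed_vector \<times> 'b \<Rightarrow> complex) \<Rightarrow> real" where
  "dual_norm l = Sup {cmod (l h) | h. cnorm h \<le> 1}"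

definition complex_cone :: "'b::real_vector set \<Rightarrow> ('b \<times> 'b) set" where
  "complex_cone C = {cmul z (x, y) | z x y. z \<noteq> 0 \<and> x \<in> C \<and> y \<in> C}"

definition cone_dual :: "'b::real_normed_vector set \<Rightarrow> ('b \<times> 'b \<Rightarrow> complex) set" where
  "cone_dual C = {l\<in>cdual. \<forall>h\<in>complex_cone C. l h \<noteq> 0}"

end

theory Submission
  imports Defs
begin


lemma le_eps_aux:
  fixes X Y Kp r :: real
  assumes "0 < r" "Kp \<ge> 0" "\<And>d. 0 < d \<Longrightarrow> d < r \<Longrightarrow> X \<le> Y + Kp * d"
  shows "X \<le> Y"
proof (rule field_le_epsilon)
  fix ep :: real assume ep: "0 < ep"
  define d where "d = min (r/2) (ep/(Kp+1))"
  have d0: "0 < d" "d < r" using assms ep by (auto simp: d_def)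
  have "Kp * d \<le> Kp * (ep/(Kp+1))" using assms by (intro mult_left_mono) (auto simp: d_def)
  also have "... \<le> ep" using assms ep by (simp add: field_simps)
  finally show "X \<le> Y + ep" using assms(3)[OF d0] by linarith
qed

lemma le_gt_aux:
  fixes X n A :: real
  assumes "A \<ge> 0" "\<And>t. n < t \<Longrightarrow> X \<le> t * A"
  shows "X \<le> n * A"
proof (rule field_le_epsilon)
  fix ep :: real assume ep: "0 < ep"
  define t where "t = n + ep/(A+1)"
  have "n < t" using assms ep by (simp add: t_def)
  hence "X \<le> t * A" by (rule assms(2))
  also have "t * A = n*A + ep * (A/(A+1))" using assms by (simp add: t_def field_simps)
  also have "ep * (A/(A+1)) \<le> ep * 1" using assms ep by (intro mult_left_mono) auto
  finally show "X \<le> n*A + ep" by simp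
qed

lemma cnorm_real: "cnorm (z, 0::'b::real_normed_vector) = norm z"
proof -
  have *: "(norm (cos \<theta> *\<^sub>R z))\<^sup>2 + (norm (sin \<theta> *\<^sub>R z))\<^sup>2 = (norm z)\<^sup>2" for \<theta> :: real
  proof -
    have "(norm (cos \<theta> *\<^sub>R z))\<^sup>2 + (norm (sin \<theta> *\<^sub>R z))\<^sup>2 = (norm z)\<^sup>2 * (cos \<theta>)\<^sup>2 + (norm z)\<^sup>2 * (sin \<theta>)\<^sup>2"
      by (simp add: power_mult_distrib)
    also have "... = (norm z)\<^sup>2" by (metis distrib_left mult.right_neutral sin_cos_squared_add2)
    finally show ?thesis .
  qed
  show ?thesis by (simp add: cnorm_def * del: norm_scaleR)
qed

lemma cnorm_ge: "sqrt ((norm x)\<^sup>2 + (norm y)\<^sup>2) \<le> cnorm (x, y::'b::real_normed_vector)"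
proof -
  define f where "f = (\<lambda>\<theta>. sqrt ((norm (cos \<theta> *\<^sub>R x - sin \<theta> *\<^sub>R y))\<^sup>2 + (norm (sin \<theta> *\<^sub>R x + cos \<theta> *\<^sub>R y))\<^sup>2))"
  have bdd: "bdd_above (f ` UNIV)"
  proof (rule bdd_aboveI2)
    fix \<theta> :: real
    have c1: "norm (cos \<theta> *\<^sub>R x) \<le> norm x" "norm (sin \<theta> *\<^sub>R x) \<le> norm x"
      "norm (cos \<theta> *\<^sub>R y) \<le> norm y" "norm (sin \<theta> *\<^sub>R y) \<le> norm y"
      by (auto intro!: mult_left_le_one_le)
    have n1: "norm (cos \<theta> *\<^sub>R x - sin \<theta> *\<^sub>R y) \<le> norm x + norm y"
      using norm_triangle_ineq4[of "cos \<theta> *\<^sub>R x" "sin \<theta> *\<^sub>R y"] c1 by linarith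
    have n2: "norm (sin \<theta> *\<^sub>R x + cos \<theta> *\<^sub>R y) \<le> norm x + norm y"
      using norm_triangle_ineq[of "sin \<theta> *\<^sub>R x" "cos \<theta> *\<^sub>R y"] c1 by linarith
    have "f \<theta> \<le> norm (cos \<theta> *\<^sub>R x - sin \<theta> *\<^sub>R y) + norm (sin \<theta> *\<^sub>R x + cos \<theta> *\<^sub>R y)"
      unfolding f_def by (rule sqrt_sum_squares_le_sum) auto
    then show "f \<theta> \<le> 2 * (norm x + norm y)" using n1 n2 by (smt (verit))
  qed
  have "f 0 \<le> Sup (f ` UNIV)" by (rule cSUP_upper[OF _ bdd]) simp
  moreover have "cnorm (x, y) = Sup (f ` UNIV)" by (simp add: cnorm_def f_def)
  moreover have "f 0 = sqrt ((norm x)\<^sup>2 + (norm y)\<^sup>2)" by (simp add: f_def)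
  ultimately show ?thesis by simp
qed

theorem lemma5p5:
  fixes S :: "('v::{real_vector,topological_space} \<Rightarrow> real) set"
    and e :: 'v
    and j :: "'v \<Rightarrow> 'b::banach"
    and ext :: "('v \<Rightarrow> real) \<Rightarrow> 'b \<Rightarrow> real"
    and m :: "'v \<Rightarrow> real" and mB :: "'b \<Rightarrow> real"
    and \<kappa> :: real
    and l :: "'b \<times> 'b \<Rightarrow> complex"
  assumes V_tvs: "tvs TYPE('v)"
    and S_dual: "S \<subseteq> top_dual"
    and S_sep: "\<And>x. (\<forall>l\<in>S. l x = 0) \<Longrightarrow> x = 0"
    and e_cone: "e \<in> pos_cone S"
    and e_unit: "\<And>h. \<exists>t\<ge>0. t *\<^sub>R e - h \<in> pos_cone S"
    and j_lin: "linear j"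
    and j_isom: "\<And>h. norm (j h) = cone_norm S e h"
    and j_dense: "closure (range j) = UNIV"
    and ext_lin: "\<And>l. l \<in> S \<Longrightarrow> bounded_linear (ext l)"
    and ext_j: "\<And>l x. l \<in> S \<Longrightarrow> ext l (j x) = l x"
    and m_S: "m \<in> S_star S"
    and mB_lin: "bounded_linear mB"
    and mB_j: "\<And>x. mB (j x) = m x"
    and \<kappa>_pos: "0 < \<kappa>" and \<kappa>_lt: "\<kappa> < 1"
    and m_e: "m e = 1"
    and m_cone: "\<And>h. h \<in> pos_cone (ext ` S) \<Longrightarrow> mB h \<ge> \<kappa> * norm h"
    and l_dual: "l \<in> cone_dual (pos_cone (ext ` S))"
  shows "dual_norm l \<le> sqrt 2 * cmod (l (j e, 0))"
  proof -
  let ?C = "pos_cone (ext ` S)"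
  from l_dual have lcd: "l \<in> cdual" and lnz: "\<And>h. h \<in> complex_cone ?C \<Longrightarrow> l h \<noteq> 0"
    unfolding cone_dual_def by auto
  from lcd have ladd: "\<And>h k. l (h + k) = l h + l k" and lmul: "\<And>z h. l (cmul z h) = z * l h"
    and "\<exists>K. \<forall>h. cmod (l h) \<le> K * cnorm h" unfolding cdual_def by auto
  then obtain K where lK: "\<And>h. cmod (l h) \<le> K * cnorm h" by auto
  define L where "L x = l (x, 0)" for x
  have Ladd: "L (x + y) = L x + L y" for x y
    using ladd[of "(x,0)" "(y,0)"] by (simp add: L_def)
  have Lscale: "L (c *\<^sub>R x) = of_real c * L x" for c x
  proof -
    have "cmul (of_real c) (x, 0) = (c *\<^sub>R x, 0)" by (simp add: cmul_def)
    then show ?thesis using lmul[of "of_real c" "(x,0)"] by (simp add: L_def)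
  qed
  have L0: "L 0 = 0" using Lscale[of 0 0] by simp
  have Lminus: "L (- x) = - L x" for x using Lscale[of "-1" x] by simp
  have Ldiff: "L (x - y) = L x - L y" for x y using Ladd[of x "-y"] Lminus[of y] by simp
  have lpair: "l (x, y) = L x + \<i> * L y" for x y
  proof -
    have "cmul \<i> (y, 0) = (0, y)" by (simp add: cmul_def)
    then have "l (0, y) = \<i> * L y" using lmul[of \<i> "(y,0)"] by (simp add: L_def)
    moreover have "l (x, y) = l ((x, 0) + (0, y))" by simp
    ultimately show ?thesis using ladd[of "(x,0)" "(0,y)"] by (simp add: L_def)
  qed
  have cc: "(x, y) \<in> complex_cone ?C" if "x \<in> ?C" "y \<in> ?C" for x y
  proof -
    have "(x, y) = cmul 1 (x, y)" by (simp add: cmul_def)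
    then have "\<exists>z x' y'. (x, y) = cmul z (x', y') \<and> z \<noteq> 0 \<and> x' \<in> ?C \<and> y' \<in> ?C"
      using that by (intro exI[of _ 1] exI[of _ x] exI[of _ y]) simp
    then show ?thesis unfolding complex_cone_def by simp
  qed
  have L_pair_nz: "L x + \<i> * L y \<noteq> 0" if "x \<in> ?C" "y \<in> ?C" for x y
    using lnz[OF cc[OF that]] lpair by simp
  have L_nz: "L x \<noteq> 0" if "x \<in> ?C" for x
    using L_pair_nz[OF that that] by auto
  interpret mBl: bounded_linear mB by (rule mB_lin)
  have comb: "s *\<^sub>R p + t *\<^sub>R q \<in> ?C" if "p \<in> ?C" "q \<in> ?C" "s > 0" "t \<ge> 0" for p q s t
  proof -
    have "mB p \<ge> \<kappa> * norm p" "mB q \<ge> \<kappa> * norm q" using m_cone that by auto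
    moreover have "p \<noteq> 0" using that(1) by (simp add: pos_cone_def)
    then have "\<kappa> * norm p > 0" using \<kappa>_pos by simp
    moreover have "\<kappa> * norm q \<ge> 0" using \<kappa>_pos by simp
    ultimately have pq: "mB p > 0" "mB q \<ge> 0" by linarith+
    have "mB (s *\<^sub>R p + t *\<^sub>R q) = s * mB p + t * mB q" by (simp add: mBl.add mBl.scaleR)
    moreover have "s * mB p > 0" using pq that by simp
    moreover have "t * mB q \<ge> 0" using pq that by simp
    ultimately have pos: "mB (s *\<^sub>R p + t *\<^sub>R q) > 0" by linarith
    show ?thesis unfolding pos_cone_def
    proof (intro CollectI conjI ballI)
      show "s *\<^sub>R p + t *\<^sub>R q \<noteq> 0" using pos mBl.zero by auto
      fix l' assume "l' \<in> ext ` S"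
      then obtain l0 where l0: "l0 \<in> S" "l' = ext l0" by auto
      interpret el: bounded_linear "ext l0" by (rule ext_lin[OF l0(1)])
      have "ext l0 p \<ge> 0" "ext l0 q \<ge> 0" using that(1,2) l0 unfolding pos_cone_def by auto
      then have "0 \<le> s * ext l0 p + t * ext l0 q" using that(3,4) by simp
      moreover have "ext l0 (s *\<^sub>R p + t *\<^sub>R q) = s * ext l0 p + t * ext l0 q"
        by (simp add: el.add el.scaleR)
      ultimately show "0 \<le> l' (s *\<^sub>R p + t *\<^sub>R q)" using l0(2) by simp
    qed
  qed
  have Lcomb: "L (s *\<^sub>R p + t *\<^sub>R q) = of_real s * L p + of_real t * L q" for s t p q
    by (simp add: Ladd Lscale)
  have keyA: "Re (L p * cnj (L q)) \<ge> 0" if pC: "p \<in> ?C" and qC: "q \<in> ?C" for p q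
  proof (rule ccontr)
    assume neg: "\<not> Re (L p * cnj (L q)) \<ge> 0"
    define a where "a = L p"
    define b where "b = L q"
    have b0: "b \<noteq> 0" using L_nz qC b_def by simp
    define w where "w = a / b"
    have aw: "a = w * b" using b0 by (simp add: w_def)
    have bb: "b * cnj b = of_real ((cmod b)\<^sup>2)" by (simp only: complex_norm_square)
    have "a * cnj b = w * of_real ((cmod b)\<^sup>2)" by (simp only: aw mult.assoc bb)
    then have eqr: "Re (a * cnj b) = Re w * (cmod b)\<^sup>2" by simp
    have r: "Re (a * cnj b) < 0" using neg a_def b_def by simp
    have "Re w < 0"
    proof (rule ccontr)
      assume "\<not> Re w < 0"
      then have "Re w * (cmod b)\<^sup>2 \<ge> 0" by simp
      then show False using r eqr by simp
    qed
    define \<alpha> where "\<alpha> = - Re w"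
    define \<beta> where "\<beta> = - Im w"
    have al: "\<alpha> > 0" using \<open>Re w < 0\<close> \<alpha>_def by simp
    have wab: "w = - (of_real \<alpha> + \<i> * of_real \<beta>)" by (simp add: complex_eq_iff \<alpha>_def \<beta>_def)
    consider "\<beta> = 0" | "\<beta> > 0" | "\<beta> < 0" by linarith
    then show False
    proof cases
      case 1
      have "1 *\<^sub>R p + \<alpha> *\<^sub>R q \<in> ?C" by (rule comb[OF pC qC]) (use al in auto)
      moreover have "L (1 *\<^sub>R p + \<alpha> *\<^sub>R q) = 0"
        unfolding Lcomb using 1 by (simp add: a_def[symmetric] b_def[symmetric] aw wab)
      ultimately show False using L_nz by blast
    next
      case 2
      have x1: "1 *\<^sub>R p + \<alpha> *\<^sub>R q \<in> ?C" by (rule comb[OF pC qC]) (use al in auto)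
      have y1: "\<beta> *\<^sub>R q + 0 *\<^sub>R q \<in> ?C" by (rule comb[OF qC qC]) (use 2 in auto)
      have "L (1 *\<^sub>R p + \<alpha> *\<^sub>R q) + \<i> * L (\<beta> *\<^sub>R q + 0 *\<^sub>R q) = 0"
        unfolding Lcomb by (simp add: a_def[symmetric] b_def[symmetric] aw wab algebra_simps)
      then show False using L_pair_nz[OF x1 y1] by blast
    next
      case 3
      define n where "n = \<alpha>\<^sup>2 + \<beta>\<^sup>2"
      have n0: "n > 0" using al by (simp add: n_def add_pos_nonneg)
      define s where "s = \<alpha> / n"
      define u where "u = - \<beta> / n"
      have s0: "s > 0" using al n0 by (simp add: s_def)
      have u0: "u > 0" using 3 n0 divide_neg_pos[of \<beta> n] by (simp add: u_def)
      have x1: "s *\<^sub>R p + 1 *\<^sub>R q \<in> ?C" by (rule comb[OF pC qC]) (use s0 in auto)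
      have y1: "u *\<^sub>R p + 0 *\<^sub>R p \<in> ?C" by (rule comb[OF pC pC]) (use u0 in auto)
      have re: "s * \<alpha> - u * \<beta> = 1" using n0
        by (simp add: s_def u_def field_simps) (simp add: n_def power2_eq_square)
      have im: "s * \<beta> + u * \<alpha> = 0" by (simp add: s_def u_def field_simps)
      have id: "(of_real s + \<i> * of_real u) * w + 1 = 0"
        using re im by (simp add: complex_eq_iff wab algebra_simps)
      have "L (s *\<^sub>R p + 1 *\<^sub>R q) + \<i> * L (u *\<^sub>R p + 0 *\<^sub>R p) = b * ((of_real s + \<i> * of_real u) * w + 1)"
        unfolding Lcomb by (simp add: a_def[symmetric] b_def[symmetric] aw algebra_simps)
      also have "... = 0" using id by simp
      finally show False using L_pair_nz[OF x1 y1] by blast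
    qed
  qed
  have keyA': "Re (L p * cnj (L q)) \<ge> 0" if "p \<in> ?C \<or> p = 0" "q \<in> ?C \<or> q = 0" for p q
    using that keyA L0 by auto
  have Sl: "linear l'" if "l' \<in> S" for l' using S_dual that unfolding top_dual_def by auto
  have le_e: "l' e \<ge> 0" if "l' \<in> S" for l' using e_cone that by (auto simp: pos_cone_def)
  have jC: "j w \<in> ?C \<or> j w = 0" if "\<And>l'. l' \<in> S \<Longrightarrow> l' w \<ge> 0" for w
  proof (cases "j w = 0")
    case False
    have "0 \<le> l' (j w)" if "l' \<in> ext ` S" for l'
      using that ext_j \<open>\<And>l'. l' \<in> S \<Longrightarrow> l' w \<ge> 0\<close> by auto
    then show ?thesis using False by (auto simp: pos_cone_def)
  qed simp
  have tri: "(j e + j v \<in> ?C \<or> j e + j v = 0) \<and> (j e - j v \<in> ?C \<or> j e - j v = 0)"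
    if nv: "norm (j v) < 1" for v
  proof -
    define T where "T = {t. t \<ge> 0 \<and> (\<forall>l\<in>S. l (t *\<^sub>R e + v) \<ge> 0 \<and> l (t *\<^sub>R e - v) \<ge> 0)}"
    have "Inf T < 1" using nv j_isom[of v] by (simp add: cone_norm_def T_def)
    moreover have "T \<noteq> {}"
    proof -
      obtain t1 where t1: "t1 \<ge> 0" "t1 *\<^sub>R e - v \<in> pos_cone S" using e_unit by blast
      obtain t2 where t2: "t2 \<ge> 0" "t2 *\<^sub>R e - (-v) \<in> pos_cone S" using e_unit by blast
      have "t1 + t2 \<in> T" unfolding T_def
      proof (intro CollectI conjI ballI)
        show "0 \<le> t1+t2" using t1 t2 by simp
        fix l' assume l': "l' \<in> S"
        have lin: "linear l'" by (rule Sl[OF l'])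
        have a1: "l' (t1 *\<^sub>R e - v) \<ge> 0" "l' (t2 *\<^sub>R e - - v) \<ge> 0"
          using t1 t2 l' by (auto simp: pos_cone_def)
        have a2: "t1 * l' e \<ge> 0" "t2 * l' e \<ge> 0" using le_e[OF l'] t1 t2 by auto
        have e1: "l' (t1 *\<^sub>R e - v) = t1 * l' e - l' v" "l' (t2 *\<^sub>R e - - v) = t2 * l' e + l' v"
          "l' ((t1+t2) *\<^sub>R e + v) = t1 * l' e + t2 * l' e + l' v"
          "l' ((t1+t2) *\<^sub>R e - v) = t1 * l' e + t2 * l' e - l' v"
          using lin by (simp_all add: linear_add linear_diff linear_scale linear_neg algebra_simps)
        show "0 \<le> l' ((t1+t2) *\<^sub>R e + v)" "0 \<le> l' ((t1+t2) *\<^sub>R e - v)"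
          using a1 a2 e1 by linarith+
      qed
      then show ?thesis by blast
    qed
    moreover have "bdd_below T" by (rule bdd_belowI[of _ 0]) (auto simp: T_def)
    ultimately obtain t where tT: "t \<in> T" and t1: "t < 1" using cInf_less_iff by blast
    have pm: "l' (e + v) \<ge> 0 \<and> l' (e - v) \<ge> 0" if l': "l' \<in> S" for l'
    proof -
      have lin: "linear l'" by (rule Sl[OF l'])
      have a1: "l' (t *\<^sub>R e + v) \<ge> 0" "l' (t *\<^sub>R e - v) \<ge> 0" using tT l' by (auto simp: T_def)
      have a2: "(1 - t) * l' e \<ge> 0" using le_e[OF l'] t1 by simp
      have e1: "l' (t *\<^sub>R e + v) = t * l' e + l' v" "l' (t *\<^sub>R e - v) = t * l' e - l' v"
        "l' (e + v) = l' e + l' v" "l' (e - v) = l' e - l' v"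
        using lin by (simp_all add: linear_add linear_diff linear_scale)
      show ?thesis using a1 a2 e1 by (simp add: algebra_simps) linarith?
    qed
    have "j (e + v) \<in> ?C \<or> j (e + v) = 0" by (rule jC) (use pm in blast)
    moreover have "j (e - v) \<in> ?C \<or> j (e - v) = 0" by (rule jC) (use pm in blast)
    ultimately show ?thesis using j_lin by (simp add: linear_add linear_diff)
  qed
  define A where "A = L (j e)"
  have jeC: "j e \<in> ?C"
  proof -
    have "j e \<noteq> 0" using mB_j[of e] m_e mBl.zero by auto
    then show ?thesis using jC[of e] le_e by blast
  qed
  have A0: "A \<noteq> 0" using L_nz[OF jeC] A_def by simp
  have B0: "cmod (L (j v)) \<le> cmod A" if "norm (j v) < 1" for v
  proof -
    define X where "X = L (j v)"
    have h0: "Re (L (j e + j v) * cnj (L (j e - j v))) \<ge> 0" using keyA'[OF conjunct1[OF tri[OF that]] conjunct2[OF tri[OF that]]] .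
    have e1: "L (j e + j v) = A + X" unfolding A_def X_def by (rule Ladd)
    have e2: "L (j e - j v) = A - X" unfolding A_def X_def by (rule Ldiff)
    have "Re ((A + X) * cnj (A - X)) \<ge> 0" using h0 unfolding e1 e2 .
    then have "(Re X)\<^sup>2 + (Im X)\<^sup>2 \<le> (Re A)\<^sup>2 + (Im A)\<^sup>2" by (simp add: algebra_simps power2_eq_square)
    then have "(cmod X)\<^sup>2 \<le> (cmod A)\<^sup>2" by (simp only: cmod_power2)
    then have "cmod X \<le> cmod A" by (rule power2_le_imp_le) simp
    then show ?thesis unfolding X_def .
  qed
  have LK: "cmod (L z) \<le> \<bar>K\<bar> * norm z" for z
  proof -
    have "cmod (L z) \<le> K * norm z" using lK[of "(z,0)"] by (simp add: L_def cnorm_real)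
    also have "... \<le> \<bar>K\<bar> * norm z" by (intro mult_right_mono) auto
    finally show ?thesis .
  qed
  have B: "cmod (L x) \<le> cmod A" if nx: "norm x < 1" for x
  proof (rule le_eps_aux[of "1 - norm x" "\<bar>K\<bar>"])
    show "0 < 1 - norm x" using nx by simp
    show "0 \<le> \<bar>K\<bar>" by simp
    fix d :: real assume d: "0 < d" "d < 1 - norm x"
    have "x \<in> closure (range j)" using j_dense by simp
    then obtain y where "y \<in> range j" "dist y x < d" using d(1) closure_approachable by metis
    then obtain v where yv: "y = j v" and dy: "norm (j v - x) < d" by (auto simp: dist_norm)
    have "norm (j v) \<le> norm x + norm (j v - x)" using norm_triangle_sub[of "j v" x] by simp
    then have "norm (j v) < 1" using dy d by simp
    then have h1: "cmod (L (j v)) \<le> cmod A" by (rule B0)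
    have h2: "cmod (L (x - j v)) \<le> \<bar>K\<bar> * d"
      using LK[of "x - j v"] dy norm_minus_commute[of x "j v"]
      by (smt (verit) abs_ge_zero mult_left_mono)
    have "L x = L (j v) + L (x - j v)" using Ladd[of "j v" "x - j v"] by simp
    then have "cmod (L x) \<le> cmod (L (j v)) + cmod (L (x - j v))" by (simp add: norm_triangle_ineq)
    then show "cmod (L x) \<le> cmod A + \<bar>K\<bar> * d" using h1 h2 by linarith
  qed
  have C: "cmod (L x) \<le> norm x * cmod A" for x
  proof (rule le_gt_aux)
    show "0 \<le> cmod A" by simp
    fix t assume t: "norm x < t"
    then have t0: "t > 0" using norm_ge_zero[of x] by linarith
    have "norm ((1/t) *\<^sub>R x) < 1" using t t0 by (simp add: field_simps)
    then have "cmod (L ((1/t) *\<^sub>R x)) \<le> cmod A" by (rule B)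
    then have "cmod (L x) / t \<le> cmod A" using t0 by (simp add: Lscale norm_mult norm_divide)
    then show "cmod (L x) \<le> t * cmod A" using t0 by (simp add: field_simps)
  qed
  have D: "cmod (l h) \<le> sqrt 2 * cmod A" if "cnorm h \<le> 1" for h
  proof -
    obtain x y where h: "h = (x, y)" by (cases h)
    have "cmod (l h) = cmod (L x + \<i> * L y)" using lpair h by simp
    also have "... \<le> cmod (L x) + cmod (L y)" using norm_triangle_ineq[of "L x" "\<i> * L y"] by (simp add: norm_mult)
    also have "... \<le> (norm x + norm y) * cmod A" using C[of x] C[of y] by (simp add: algebra_simps)
    also have "... \<le> (sqrt 2 * sqrt ((norm x)\<^sup>2 + (norm y)\<^sup>2)) * cmod A"
    proof (rule mult_right_mono)
      have sq0: "0 \<le> (norm x - norm y)\<^sup>2" by simp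
      have sq: "(norm x + norm y)\<^sup>2 \<le> 2 * ((norm x)\<^sup>2 + (norm y)\<^sup>2)"
        using sq0 unfolding power2_eq_square by (simp add: algebra_simps)
      have "norm x + norm y \<le> sqrt (2 * ((norm x)\<^sup>2 + (norm y)\<^sup>2))"
        by (rule real_le_rsqrt[OF sq])
      then show "norm x + norm y \<le> sqrt 2 * sqrt ((norm x)\<^sup>2 + (norm y)\<^sup>2)"
        by (simp only: real_sqrt_mult)
    qed simp
    also have "... \<le> (sqrt 2 * 1) * cmod A"
    proof (intro mult_right_mono mult_left_mono)
      show "sqrt ((norm x)\<^sup>2 + (norm y)\<^sup>2) \<le> 1" by (rule order_trans[OF cnorm_ge[of x y]]) (use that h in simp)
    qed auto
    finally show ?thesis by simp
  qed
  show ?thesis unfolding dual_norm_def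
  proof (rule cSup_least)
    have "cnorm ((0::'b), (0::'b)) \<le> 1" unfolding cnorm_real by simp
    then show "{cmod (l h) |h. cnorm h \<le> 1} \<noteq> {}" by blast
    fix r assume "r \<in> {cmod (l h) |h. cnorm h \<le> 1}"
    then show "r \<le> sqrt 2 * cmod (l (j e, 0))" using D A_def L_def by auto
  qed
qed

end
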